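(* Let $f:\mathbb{R}^n\to\mathbb{R}\cup\{+\infty\}$ be closed and convex, let $X\in\mathbb{R}^{n\times m}$ have rank $r$ with compact SVD $X=U_r\Sigma_r V_r^\top$, let $\gamma>0$, $\lambda>0$. Define $$p^*_{\rm pen}(\lambda)=\min_{w\in\mathbb{R}^m}\ f(Xw)+\lambda\|w\|_0\quad\text{s.t.}\quad\|w\|_2^2\le\gamma,$$ $$p^{**}_{\rm pen}(\lambda)=\min_{v\in\mathbb{R}^m,\ u\in[0,1]^m}\ f(XD(u)v)+\lambda\mathbf 1^\top u\quad\text{s.t.}\quad v^\top D(u)v\le\gamma .$$ Let $(v^*,u^* )$ be an optimal solution of the latter with optimal value $t^*$, let $z^*=\Sigma_rV_r^\top D(u^* )v^*$, let $\ell_i$ be the $i$-th column of $\Sigma_rV_r^\top$, let $c\sim\mathcal N(0,I_m)$, and consider the linear program in $u\in\mathbb{R}^m$: $$\min\ c^\top u\quad\text{s.t.}\quad f(U_rz^* )+\lambda\sum_{i=1}^m u_i=t^*,\quad \sum_{i=1}^m u_i(v_i^* )^2\le\gamma,\quad \sum_{i=1}^m u_i\ell_iv_i^*=z^*,\quad u\in[0,1]^m.$$ Then, with probability one, from an optimal basic feasible solution $\bar u$ of this linear program one can construct a feasible point (with $S=\{i:\bar u_i\notin\{0,1\}\}$, $\tilde u_i=1,\tilde v_i=\bar u_iv_i^*$ for $i\in S$, $\tilde u_i=\bar u_i,\tilde v_i=v_i^*$ otherwise, $w=D(\tilde u)\tilde v$) whose objective value $\mathrm{OPT}=f(Xw)+\lambda\mathbf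 1^\top\tilde u$ satisfies $$p^{**}_{\rm pen}(\lambda)\le p^*_{\rm pen}(\lambda)\le\mathrm{OPT}\le p^{**}_{\rm pen}(\lambda)+\lambda(r+1).$$
   Context: $\|w\|_0$ is the number of nonzero entries of $w$; $D(u)=\mathrm{diag}(u_1,\dots,u_m)$; $\mathbf 1$ is the all-ones vector. Note $p^*_{\rm pen}(\lambda)=\min_{v\in\mathbb{R}^m,u\in\{0,1\}^m} f(XD(u)v)+\lambda\mathbf 1^\top u$ s.t. $v^\top D(u)v\le\gamma$. *)

theory Defs
  imports "HOL-Analysis.Analysis" "HOL-Probability.Probability"
begin

text \<open>Extended-valued functions f : R^n -> R \<union> {+\<infinity>}, modelled as ereal-valued
  functions never taking the value -\<infinity>. Closed / convex via the epigraph.\<close>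

definition ext_epigraph :: "('a \<Rightarrow> ereal) \<Rightarrow> ('a \<times> real) set" where
  "ext_epigraph f = {(x, t). f x \<le> ereal t}"

definition closed_convex_ext :: "('a::real_normed_vector \<Rightarrow> ereal) \<Rightarrow> bool" where
  "closed_convex_ext f \<longleftrightarrow> (\<forall>x. f x \<noteq> -\<infinity>) \<and> convex (ext_epigraph f) \<and> closed (ext_epigraph f)"

definition Dmul :: "real^'m \<Rightarrow> real^'m \<Rightarrow> real^'m" where
  "Dmul u v = (\<chi> i. u$i * v$i)"

definition l0 :: "real^'m \<Rightarrow> nat" where
  "l0 w = card {i. w$i \<noteq> 0}"

definition p_pen :: "(real^'n \<Rightarrow> ereal) \<Rightarrow> real^'m^'n \<Rightarrow> real \<Rightarrow> real \<Rightarrow> ereal" where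
  "p_pen f X gam lam = (INF w \<in> {w. (norm w)^2 \<le> gam}. f (X *v w) + ereal (lam * real (l0 w)))"

definition relax_feasible :: "real \<Rightarrow> real^'m \<Rightarrow> real^'m \<Rightarrow> bool" where
  "relax_feasible gam v u \<longleftrightarrow> (\<forall>i. 0 \<le> u$i \<and> u$i \<le> 1) \<and> v \<bullet> Dmul u v \<le> gam"

definition relax_obj :: "(real^'n \<Rightarrow> ereal) \<Rightarrow> real^'m^'n \<Rightarrow> real \<Rightarrow> real^'m \<Rightarrow> real^'m \<Rightarrow> ereal" where
  "relax_obj f X lam v u = f (X *v Dmul u v) + ereal (lam * (\<Sum>i\<in>UNIV. u$i))"

definition p_pen_relax :: "(real^'n \<Rightarrow> ereal) \<Rightarrow> real^'m^'n \<Rightarrow> real \<Rightarrow> real \<Rightarrow> ereal" where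
  "p_pen_relax f X gam lam = (INF vu \<in> {(v, u). relax_feasible gam v u}. relax_obj f X lam (fst vu) (snd vu))"

text \<open>The linear program of the corollary. L = \<Sigma>_r V_r^T (so column i of L is \<ell>_i),
  U = U_r, vs = v*, zs = z*, ts = t*, fU = f(U_r z* ).\<close>

definition lp_feasible ::
  "ereal \<Rightarrow> real \<Rightarrow> ereal \<Rightarrow> real \<Rightarrow> real^'m^'r \<Rightarrow> real^'m \<Rightarrow> real^'r \<Rightarrow> real^'m \<Rightarrow> bool" where
  "lp_feasible fU lam ts gam L vs zs u \<longleftrightarrow>
     fU + ereal (lam * (\<Sum>i\<in>UNIV. u$i)) = ts \<and>
     (\<Sum>i\<in>UNIV. u$i * (vs$i)^2) \<le> gam \<and>
     (\<Sum>i\<in>UNIV. (u$i * vs$i) *\<^sub>R column i L) = zs \<and>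
     (\<forall>i. 0 \<le> u$i \<and> u$i \<le> 1)"

text \<open>Gradients of the constraints active at u (equality constraints are always active).\<close>
definition lp_active_grads :: "real \<Rightarrow> real^'m^'r \<Rightarrow> real^'m \<Rightarrow> real^'m \<Rightarrow> (real^'m) set" where
  "lp_active_grads gam L vs u =
     {\<chi> i. 1} \<union>
     {(\<chi> i. (vs$i)^2) | _::unit. (\<Sum>i\<in>UNIV. u$i * (vs$i)^2) = gam} \<union>
     {(\<chi> i. L$k$i * vs$i) | k. True} \<union>
     {axis i 1 | i. u$i = 0 \<or> u$i = 1}"

definition lp_bfs ::
  "ereal \<Rightarrow> real \<Rightarrow> ereal \<Rightarrow> real \<Rightarrow> real^'m^'r \<Rightarrow> real^'m \<Rightarrow> real^'r \<Rightarrow> real^'m \<Rightarrow> bool" where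
  "lp_bfs fU lam ts gam L vs zs u \<longleftrightarrow>
     lp_feasible fU lam ts gam L vs zs u \<and> span (lp_active_grads gam L vs u) = UNIV"

definition lp_optimal_bfs ::
  "real^'m \<Rightarrow> ereal \<Rightarrow> real \<Rightarrow> ereal \<Rightarrow> real \<Rightarrow> real^'m^'r \<Rightarrow> real^'m \<Rightarrow> real^'r \<Rightarrow> real^'m \<Rightarrow> bool" where
  "lp_optimal_bfs c fU lam ts gam L vs zs u \<longleftrightarrow>
     lp_bfs fU lam ts gam L vs zs u \<and>
     (\<forall>u'. lp_feasible fU lam ts gam L vs zs u' \<longrightarrow> c \<bullet> u \<le> c \<bullet> u')"

definition std_gaussian :: "(real^'m) measure" where
  "std_gaussian = density lborel (\<lambda>x. ennreal (\<Prod>i\<in>UNIV. std_normal_density (x$i)))"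

definition frac_set :: "real^'m \<Rightarrow> 'm set" where
  "frac_set ub = {i. ub$i \<notin> {0, 1}}"

definition round_u :: "real^'m \<Rightarrow> real^'m" where
  "round_u ub = (\<chi> i. if i \<in> frac_set ub then 1 else ub$i)"

definition round_v :: "real^'m \<Rightarrow> real^'m \<Rightarrow> real^'m" where
  "round_v ub vs = (\<chi> i. if i \<in> frac_set ub then ub$i * vs$i else vs$i)"

end

theory Submission imports Defs begin

lemma in_span_axes:
  fixes x :: "real^'m"
  assumes "\<forall>i\<in>S. x$i = 0"
  shows "x \<in> span {axis i 1 | i. i \<notin> S}"
proof -
  have "x = (\<Sum>i\<in>UNIV. x$i *\<^sub>R axis i 1)"
    using basis_expansion[of x] by (simp add: scalar_mult_eq_scaleR)
  also have "\<dots> = (\<Sum>i\<in>-S. x$i *\<^sub>R axis i 1)"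
    by (rule sum.mono_neutral_right) (use assms in auto)
  also have "\<dots> \<in> span {axis i 1 | i. i \<notin> S}"
    by (intro span_sum span_scale span_base) auto
  finally show ?thesis .
qed

lemma sum_two:
  fixes g h :: "'m::finite \<Rightarrow> real"
  assumes "i \<noteq> j" "\<And>k. k \<noteq> i \<Longrightarrow> k \<noteq> j \<Longrightarrow> g k = h k"
  shows "sum g UNIV = sum h UNIV + (g i - h i) + (g j - h j)"
proof -
  have "(\<Sum>k\<in>UNIV. g k - h k) = (\<Sum>k\<in>UNIV. (if k = i then g i - h i else 0) + (if k = j then g j - h j else 0))"
    by (rule sum.cong) (use assms in auto)
  then show ?thesis by (simp add: sum.distrib sum_subtractf)
qed

lemma relax_le_pen: fixes X :: "real^'m^'n" shows "p_pen_relax f X gam lam \<le> p_pen f X gam lam"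
  unfolding p_pen_def
proof (rule INF_greatest)
  fix w :: "real^'m" assume w: "w \<in> {w. (norm w)^2 \<le> gam}"
  define u :: "real^'m" where "u = (\<chi> i. if w$i \<noteq> 0 then 1 else 0)"
  have Dw: "Dmul u w = w" unfolding Dmul_def u_def by (simp add: vec_eq_iff)
  have "w \<bullet> Dmul u w = (norm w)^2" by (simp add: Dw power2_norm_eq_inner)
  then have feas: "relax_feasible gam w u" using w unfolding relax_feasible_def u_def by auto
  have "(\<Sum>i\<in>UNIV. u$i) = real (l0 w)"
    unfolding u_def l0_def by (simp add: sum.If_cases)
  then have "relax_obj f X lam w u = f (X *v w) + ereal (lam * real (l0 w))"
    unfolding relax_obj_def by (simp add: Dw)
  moreover have "p_pen_relax f X gam lam \<le> relax_obj f X lam w u"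
    unfolding p_pen_relax_def by (rule INF_lower2[of "(w,u)"]) (use feas in auto)
  ultimately show "p_pen_relax f X gam lam \<le> f (X *v w) + ereal (lam * real (l0 w))" by simp
qed
lemma pert:
  fixes p q A B :: real
  assumes "0<p" "p<1" "0<q" "q<1" "0\<le>A" "A<B"
  shows "\<exists>\<alpha> \<beta>. \<alpha>>0 \<and> 0\<le>\<beta> \<and> \<beta> \<le> 1-q \<and> p*A*\<alpha> = q*B*\<beta> \<and> p/(1+\<alpha>) + q/(1-\<beta>) < p+q"
proof -
  have B0: "B > 0" using assms by linarith
  define \<alpha> where "\<alpha> = (B-A)*q*(1-q)/(4*B)"
  define \<beta> where "\<beta> = p*A*\<alpha>/(q*B)"
  have a0: "\<alpha> > 0" unfolding \<alpha>_def using assms B0 by simp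
  have b0: "\<beta> \<ge> 0" unfolding \<beta>_def using assms B0 a0 by simp
  have "\<beta> = p*(A/B)*(B-A)*(1-q)/(4*B)" unfolding \<beta>_def \<alpha>_def using assms B0 by (simp add: field_simps)
  also have "\<dots> \<le> 1*1*(B-A)*(1-q)/(4*B)"
    using assms B0 by (intro divide_right_mono mult_right_mono mult_mono) auto
  also have "\<dots> \<le> 1*1*B*(1-q)/(4*B)"
    using assms B0 by (intro divide_right_mono mult_right_mono mult_mono) auto
  also have "\<dots> = (1-q)/4" using B0 by simp
  finally have b1: "\<beta> \<le> (1-q)/4" .
  have eq: "p*A*\<alpha> = q*B*\<beta>" unfolding \<beta>_def using assms B0 by simp
  have key: "A*(1+\<alpha>) < B*(1-\<beta>)"
  proof -
    have "A*\<alpha> + B*\<beta> = A*\<alpha>*(1 + p/q)" using eq assms B0 by (simp add: field_simps)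
    also have "\<dots> = A*(B-A)*(1-q)*(q+p)/(4*B)" unfolding \<alpha>_def using assms by (simp add: field_simps)
    also have "\<dots> \<le> B*(B-A)*1*2/(4*B)"
      using assms B0 by (intro divide_right_mono mult_mono) auto
    also have "\<dots> < B - A" using assms B0 by simp
    finally show ?thesis by (simp add: algebra_simps)
  qed
  have "q/(1-\<beta>) - q = q*\<beta>/(1-\<beta>)" using b1 assms by (simp add: field_simps)
  also have "\<dots> = p*A*\<alpha>/(B*(1-\<beta>))" using eq B0 b1 assms by (simp add: field_simps)
  also have "\<dots> < p*\<alpha>/(1+\<alpha>)"
  proof -
    have "p*\<alpha>*A*(1+\<alpha>) < p*\<alpha>*(B*(1-\<beta>))" using key assms a0 by simp
    then show ?thesis using a0 b1 assms B0 by (simp add: field_simps)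
  qed
  also have "\<dots> = p - p/(1+\<alpha>)" using a0 by (simp add: field_simps)
  finally have "p/(1+\<alpha>) + q/(1-\<beta>) < p+q" by simp
  moreover have "\<beta> \<le> 1-q" using b1 assms by simp
  ultimately show ?thesis using a0 b0 eq by blast
qed

lemma cardS_le:
  fixes T :: "(real^'m) set" and S :: "'m set"
  assumes fin: "finite T" and sp: "span (T \<union> {axis i 1 | i. i \<notin> S}) = UNIV"
  shows "card S \<le> card T"
proof -
  let ?A = "{axis i 1 | i. i \<notin> S} :: (real^'m) set"
  have A_eq: "?A = (\<lambda>i. axis i 1) ` (- S)" by auto
  have cardA: "card ?A = card (- S)"
    unfolding A_eq by (rule card_image) (auto simp: inj_on_def axis_eq_axis)
  have "CARD('m) = dim (UNIV :: (real^'m) set)" by simp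
  also have "\<dots> \<le> card (T \<union> ?A)"
    by (rule dim_le_card) (use sp fin A_eq in auto)
  also have "\<dots> \<le> card T + card ?A" by (rule card_Un_le)
  also have "card ?A = CARD('m) - card S"
    using cardA by (simp add: Compl_eq_Diff_UNIV card_Diff_subset)
  finally show ?thesis
    using card_mono[of "UNIV::'m set" S] by simp
qed

theorem corollary4p2:
  fixes f :: "real^'n \<Rightarrow> ereal"
    and X :: "real^'m^'n"
    and U :: "real^'r^'n" and Sig :: "real^'r^'r" and V :: "real^'r^'m"
    and gam lam :: real
    and vs us :: "real^'m" and ts :: ereal
  assumes f_cc: "closed_convex_ext f"
    and rankX: "rank X = CARD('r)"
    and U_orth: "transpose U ** U = mat 1"
    and V_orth: "transpose V ** V = mat 1"
    and Sig_diag: "\<forall>i j. i \<noteq> j \<longrightarrow> Sig$i$j = 0"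
    and Sig_pos: "\<forall>i. Sig$i$i > 0"
    and svd: "X = U ** Sig ** transpose V"
    and gamma_pos: "gam > 0" and lambda_pos: "lam > 0"
    and opt_feas: "relax_feasible gam vs us"
    and opt_val: "relax_obj f X lam vs us = p_pen_relax f X gam lam"
    and ts_def: "ts = relax_obj f X lam vs us"
  shows "AE c in std_gaussian.
           \<forall>ub. lp_optimal_bfs c (f (U *v (Sig ** transpose V *v Dmul us vs))) lam ts gam
                   (Sig ** transpose V) vs (Sig ** transpose V *v Dmul us vs) ub \<longrightarrow>
             (let ut = round_u ub; vt = round_v ub vs; w = Dmul ut vt;
                  OPT = f (X *v w) + ereal (lam * (\<Sum>i\<in>UNIV. ut$i))
              in (\<forall>i. ut$i \<in> {0, 1}) \<and> vt \<bullet> Dmul ut vt \<le> gam \<and> (norm w)^2 \<le> gam \<and>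
                 p_pen_relax f X gam lam \<le> p_pen f X gam lam \<and>
                 p_pen f X gam lam \<le> OPT \<and>
                 OPT \<le> p_pen_relax f X gam lam + ereal (lam * (real (rank X) + 1)))"
proof (rule AE_I2, intro allI impI)
  fix c ub :: "real^'m"
  define L where "L = Sig ** transpose V"
  define zs where "zs = L *v Dmul us vs"
  define fU where "fU = f (U *v zs)"
  define a :: "real^'m" where "a = (\<chi> i. (vs$i)^2)"
  define S where "S = frac_set ub"
  assume "lp_optimal_bfs c (f (U *v (Sig ** transpose V *v Dmul us vs))) lam ts gam
                   (Sig ** transpose V) vs (Sig ** transpose V *v Dmul us vs) ub"
  then have bfs: "lp_bfs fU lam ts gam L vs zs ub"
    unfolding lp_optimal_bfs_def L_def zs_def fU_def by simp
  then have F1: "fU + ereal (lam * (\<Sum>i\<in>UNIV. ub$i)) = ts"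
    and F2: "(\<Sum>i\<in>UNIV. ub$i * (vs$i)^2) \<le> gam"
    and F3: "(\<Sum>i\<in>UNIV. (ub$i * vs$i) *\<^sub>R column i L) = zs"
    and F4: "\<forall>i. 0 \<le> ub$i \<and> ub$i \<le> 1"
    and SP: "span (lp_active_grads gam L vs ub) = UNIV"
    unfolding lp_bfs_def lp_feasible_def by auto
  have XL: "X *v x = U *v (L *v x)" for x
    unfolding svd L_def by (simp add: matrix_vector_mul_assoc matrix_mul_assoc)
  have Lsum: "L *v x = (\<Sum>i\<in>UNIV. x$i *\<^sub>R column i L)" for x
    by (simp add: matrix_mult_sum scalar_mult_eq_scaleR)
  have Xub: "X *v Dmul ub vs = U *v zs"
    unfolding XL Lsum using F3 by (simp add: Dmul_def)
  have fUus: "f (X *v Dmul us vs) = fU" unfolding fU_def zs_def XL ..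
  have ts_eq: "ts = fU + ereal (lam * (\<Sum>i\<in>UNIV. us$i))"
    unfolding ts_def relax_obj_def fUus ..
  have prelax: "p_pen_relax f X gam lam = ts" using opt_val ts_def by simp
  have fUninf: "fU \<noteq> -\<infinity>" using f_cc unfolding closed_convex_ext_def fU_def by auto
  have Sdef: "i \<in> S \<longleftrightarrow> 0 < ub$i \<and> ub$i < 1" for i
    using F4[rule_format, of i] unfolding S_def frac_set_def by auto
  define ut where "ut = round_u ub"
  define vt where "vt = round_v ub vs"
  define w where "w = Dmul ut vt"
  define OPT where "OPT = f (X *v w) + ereal (lam * (\<Sum>i\<in>UNIV. ut$i))"
  have w_eq: "w = Dmul ub vs"
    unfolding w_def ut_def vt_def Dmul_def round_u_def round_v_def by (simp add: vec_eq_iff)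
  have OPT_eq: "OPT = fU + ereal (lam * (\<Sum>i\<in>UNIV. ut$i))"
    unfolding OPT_def w_eq Xub fU_def ..
  have ut01: "\<forall>i. ut$i \<in> {0, 1}"
    unfolding ut_def round_u_def frac_set_def by auto
  have term_le: "vt$i * (ut$i * vt$i) \<le> ub$i * (vs$i)^2" for i
  proof (cases "i \<in> S")
    case True
    then have "vt$i * (ut$i * vt$i) = (ub$i)^2 * (vs$i)^2"
      unfolding ut_def vt_def round_u_def round_v_def S_def by (simp add: power2_eq_square)
    also have "\<dots> \<le> ub$i * (vs$i)^2"
      using Sdef[of i] True by (intro mult_right_mono) (auto simp: power2_eq_square)
    finally show ?thesis .
  next
    case False
    then show ?thesis
      unfolding ut_def vt_def round_u_def round_v_def S_def by (simp add: power2_eq_square)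
  qed
  have feas1: "vt \<bullet> Dmul ut vt \<le> gam"
  proof -
    have "vt \<bullet> Dmul ut vt = (\<Sum>i\<in>UNIV. vt$i * (ut$i * vt$i))"
      unfolding inner_vec_def Dmul_def by simp
    also have "\<dots> \<le> (\<Sum>i\<in>UNIV. ub$i * (vs$i)^2)" by (rule sum_mono) (rule term_le)
    finally show ?thesis using F2 by simp
  qed
  have wsq: "(norm w)^2 = vt \<bullet> Dmul ut vt"
  proof -
    have "(norm w)^2 = (\<Sum>i\<in>UNIV. w$i * w$i)"
      unfolding power2_norm_eq_inner inner_vec_def by simp
    also have "\<dots> = (\<Sum>i\<in>UNIV. vt$i * (ut$i * vt$i))"
    proof (rule sum.cong)
      fix i :: 'm
      have "ut$i = 0 \<or> ut$i = 1" using ut01 by blast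
      then show "w$i * w$i = vt$i * (ut$i * vt$i)"
        unfolding w_def Dmul_def by auto
    qed simp
    also have "\<dots> = vt \<bullet> Dmul ut vt" unfolding inner_vec_def Dmul_def by simp
    finally show ?thesis .
  qed
  have feas2: "(norm w)^2 \<le> gam" using wsq feas1 by simp
  have rel_pen: "p_pen_relax f X gam lam \<le> p_pen f X gam lam" by (rule relax_le_pen)
  have pen_opt: "p_pen f X gam lam \<le> OPT"
  proof -
    have "{i. w$i \<noteq> 0} \<subseteq> {i. ut$i = 1}"
    proof safe
      fix i assume "w$i \<noteq> 0"
      then have "ut$i \<noteq> 0" unfolding w_def Dmul_def by auto
      then show "ut$i = 1" using ut01 by blast
    qed
    then have "card {i. w$i \<noteq> 0} \<le> card {i. ut$i = 1}" by (rule card_mono[OF finite])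
    moreover have "(\<Sum>i\<in>UNIV. ut$i) = real (card {i. ut$i = 1})"
    proof -
      have "(\<Sum>i\<in>UNIV. ut$i) = (\<Sum>i\<in>UNIV. if ut$i = 1 then 1 else 0)"
        by (rule sum.cong) (use ut01 in auto)
      then show ?thesis by (simp add: sum.If_cases)
    qed
    ultimately have "lam * real (l0 w) \<le> lam * (\<Sum>i\<in>UNIV. ut$i)"
      unfolding l0_def using lambda_pos by simp
    then have "f (X *v w) + ereal (lam * real (l0 w)) \<le> OPT"
      unfolding OPT_def by (intro add_left_mono) simp
    moreover have "p_pen f X gam lam \<le> f (X *v w) + ereal (lam * real (l0 w))"
      unfolding p_pen_def by (rule INF_lower) (use feas2 in simp)
    ultimately show ?thesis by simp
  qed
  have opt_bound: "OPT \<le> p_pen_relax f X gam lam + ereal (lam * (real (rank X) + 1))"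
  proof (cases fU)
    case PInf
    then have "ts = \<infinity>" using F1 by simp
    then show ?thesis using prelax by simp
  next
    case MInf then show ?thesis using fUninf by simp
  next
    case (real y)
    have cardS: "card S \<le> CARD('r) + 1"
    proof -
      define rows :: "(real^'m) set" where "rows = (\<lambda>k. \<chi> i. L$k$i * vs$i) ` (UNIV::'r set)"
      define one :: "real^'m" where "one = (\<chi> i. 1)"
      define T' where "T' = insert one rows"
      define Ax :: "(real^'m) set" where "Ax = {axis i 1 | i. i \<notin> S}"
      define active where "active = ((\<Sum>i\<in>UNIV. ub$i * (vs$i)^2) = gam)"
      have finT': "finite T'" unfolding T'_def rows_def by simp
      have "card T' \<le> Suc (card rows)" unfolding T'_def by (rule card_insert_le_m1) simp_all
      moreover have "card rows \<le> CARD('r)" unfolding rows_def by (rule card_image_le) simp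
      ultimately have cardT': "card T' \<le> CARD('r) + 1" by simp
      have G_sub: "lp_active_grads gam L vs ub \<subseteq> (if active then insert a (T' \<union> Ax) else T' \<union> Ax)"
      proof
        fix x assume "x \<in> lp_active_grads gam L vs ub"
        then consider "x = one" | "x = a \<and> active" | "x \<in> rows" | "\<exists>i. x = axis i 1 \<and> (ub$i = 0 \<or> ub$i = 1)"
          unfolding lp_active_grads_def one_def a_def active_def rows_def by blast
        then show "x \<in> (if active then insert a (T' \<union> Ax) else T' \<union> Ax)"
        proof cases
          case 4
          then obtain i where "x = axis i 1" "ub$i = 0 \<or> ub$i = 1" by blast
          moreover have "i \<notin> S" using Sdef[of i] calculation(2) by auto
          ultimately have "x \<in> Ax" unfolding Ax_def by blast
          then show ?thesis by simp
        qed (auto simp: T'_def)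
      qed
      have key: "active \<longrightarrow> a \<in> span (T' \<union> Ax)"
      proof
        assume act: active
        show "a \<in> span (T' \<union> Ax)"
        proof (cases "\<forall>i\<in>S. \<forall>j\<in>S. a$i = a$j")
          case True
          show ?thesis
          proof (cases "S = {}")
            case True
            then have "a \<in> span Ax" unfolding Ax_def by (intro in_span_axes) simp
            then show ?thesis using span_mono[of Ax "T' \<union> Ax"] by auto
          next
            case False
            then obtain s0 where s0: "s0 \<in> S" by blast
            have "a - (a$s0) *\<^sub>R one \<in> span Ax"
              unfolding Ax_def
            proof (intro in_span_axes ballI)
              fix i assume "i \<in> S"
              then have "a$i = a$s0" using True s0 by blast
              then show "(a - (a$s0) *\<^sub>R one)$i = 0" by (simp add: one_def)
            qed
            then have "a - (a$s0) *\<^sub>R one \<in> span (T' \<union> Ax)"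
              using span_mono[of Ax "T' \<union> Ax"] by auto
            moreover have "(a$s0) *\<^sub>R one \<in> span (T' \<union> Ax)"
              by (intro span_scale span_base) (simp add: T'_def)
            ultimately have "(a - (a$s0) *\<^sub>R one) + (a$s0) *\<^sub>R one \<in> span (T' \<union> Ax)"
              by (rule span_add)
            then show ?thesis by simp
          qed
        next
          case False
          then obtain i j where ij: "i \<in> S" "j \<in> S" "a$i < a$j"
            by (metis linorder_neq_iff)
          have False
          proof -
            have iS: "0 < ub$i" "ub$i < 1" and jS: "0 < ub$j" "ub$j < 1" using ij Sdef by auto
            have A0: "0 \<le> a$i" unfolding a_def by simp
            obtain \<alpha> \<beta> where ab: "\<alpha>>0" "0\<le>\<beta>" "\<beta> \<le> 1 - ub$j"
              "ub$i * (a$i) * \<alpha> = ub$j * (a$j) * \<beta>"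
              "ub$i/(1+\<alpha>) + ub$j/(1-\<beta>) < ub$i + ub$j"
              using pert[OF iS jS A0 ij(3)] by blast
            have ne: "i \<noteq> j" using ij(3) by auto
            have b1: "1 - \<beta> > 0" using ab jS by linarith
            define v' :: "real^'m" where "v' = (\<chi> k. if k = i then vs$i * (1+\<alpha>) else if k = j then vs$j * (1-\<beta>) else vs$k)"
            define u' :: "real^'m" where "u' = (\<chi> k. if k = i then ub$i / (1+\<alpha>) else if k = j then ub$j / (1-\<beta>) else ub$k)"
            have Dm: "Dmul u' v' = Dmul ub vs"
              unfolding Dmul_def u'_def v'_def vec_eq_iff using ab b1 ne by auto
            have u'b: "\<forall>k. 0 \<le> u'$k \<and> u'$k \<le> 1"
            proof
              fix k
              have "ub$j / (1-\<beta>) \<le> 1" using b1 ab by (simp add: divide_le_eq)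
              moreover have "ub$i / (1+\<alpha>) \<le> 1" using ab iS by (simp add: divide_le_eq)
              ultimately show "0 \<le> u'$k \<and> u'$k \<le> 1"
                unfolding u'_def using F4 ab b1 iS jS by auto
            qed
            have "v' \<bullet> Dmul u' v' = (\<Sum>k\<in>UNIV. v'$k * (u'$k * v'$k))"
              unfolding inner_vec_def Dmul_def by simp
            also have "\<dots> = (\<Sum>k\<in>UNIV. ub$k * (vs$k)^2)
                 + (v'$i * (u'$i * v'$i) - ub$i * (vs$i)^2) + (v'$j * (u'$j * v'$j) - ub$j * (vs$j)^2)"
              by (rule sum_two[OF ne]) (simp add: u'_def v'_def power2_eq_square)
            also have "v'$i * (u'$i * v'$i) - ub$i * (vs$i)^2 = ub$i * (a$i) * \<alpha>"
              unfolding u'_def v'_def a_def using ab ne by (simp add: field_simps power2_eq_square)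
            also have "v'$j * (u'$j * v'$j) - ub$j * (vs$j)^2 = - (ub$j * (a$j) * \<beta>)"
              unfolding u'_def v'_def a_def using b1 ne by (simp add: field_simps power2_eq_square)
            finally have "v' \<bullet> Dmul u' v' = gam" using act ab(4) unfolding active_def by simp
            then have feas': "relax_feasible gam v' u'" unfolding relax_feasible_def using u'b by simp
            have "(\<Sum>k\<in>UNIV. u'$k) = (\<Sum>k\<in>UNIV. ub$k) + (u'$i - ub$i) + (u'$j - ub$j)"
              by (rule sum_two[OF ne]) (simp add: u'_def)
            also have "\<dots> < (\<Sum>k\<in>UNIV. ub$k)" unfolding u'_def using ab ne by simp
            finally have su: "(\<Sum>k\<in>UNIV. u'$k) < (\<Sum>k\<in>UNIV. ub$k)" .
            have "relax_obj f X lam v' u' = ereal (y + lam * (\<Sum>k\<in>UNIV. u'$k))"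
              unfolding relax_obj_def Dm Xub fU_def[symmetric] real by simp
            also have "\<dots> < ereal (y + lam * (\<Sum>k\<in>UNIV. ub$k))"
              using su lambda_pos by simp
            also have "\<dots> = ts" using F1 real by simp
            finally have "relax_obj f X lam v' u' < ts" .
            moreover have "p_pen_relax f X gam lam \<le> relax_obj f X lam v' u'"
              unfolding p_pen_relax_def by (rule INF_lower2[of "(v',u')"]) (use feas' in auto)
            ultimately show False using prelax by simp
          qed
          then show ?thesis ..
        qed
      qed
      have "UNIV = span (lp_active_grads gam L vs ub)" using SP by simp
      also have "\<dots> \<subseteq> span (T' \<union> Ax)"
      proof (cases active)
        case True
        then have "span (lp_active_grads gam L vs ub) \<subseteq> span (insert a (T' \<union> Ax))"
          using G_sub by (intro span_mono) simp
        also have "\<dots> = span (T' \<union> Ax)" using key True by (intro span_redundant) simp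
        finally show ?thesis .
      next
        case False
        then show ?thesis using G_sub by (intro span_mono) simp
      qed
      finally have "span (T' \<union> Ax) = UNIV" by auto
      then have "card S \<le> card T'" unfolding Ax_def by (intro cardS_le finT')
      then show ?thesis using cardT' by simp
    qed
    have "(\<Sum>i\<in>UNIV. ut$i) \<le> (\<Sum>i\<in>UNIV. ub$i + (if i \<in> S then 1 else 0))"
      by (rule sum_mono) (use F4 in \<open>auto simp: ut_def round_u_def S_def\<close>)
    also have "\<dots> = (\<Sum>i\<in>UNIV. ub$i) + real (card S)"
      by (simp add: sum.distrib sum.If_cases)
    finally have "(\<Sum>i\<in>UNIV. ut$i) \<le> (\<Sum>i\<in>UNIV. ub$i) + (real (rank X) + 1)"
      using cardS rankX by linarith
    then have "lam * (\<Sum>i\<in>UNIV. ut$i) \<le> lam * (\<Sum>i\<in>UNIV. ub$i) + lam * (real (rank X) + 1)"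
    proof -
      have "lam * (\<Sum>i\<in>UNIV. ut$i) \<le> lam * ((\<Sum>i\<in>UNIV. ub$i) + (real (rank X) + 1))"
        using lambda_pos \<open>(\<Sum>i\<in>UNIV. ut$i) \<le> (\<Sum>i\<in>UNIV. ub$i) + (real (rank X) + 1)\<close>
        by (intro mult_left_mono) auto
      then show ?thesis by (simp add: distrib_left)
    qed
    then show ?thesis
      unfolding OPT_eq prelax F1[symmetric] real by simp
  qed
  show "let ut = round_u ub; vt = round_v ub vs; w = Dmul ut vt;
                  OPT = f (X *v w) + ereal (lam * (\<Sum>i\<in>UNIV. ut$i))
              in (\<forall>i. ut$i \<in> {0, 1}) \<and> vt \<bullet> Dmul ut vt \<le> gam \<and> (norm w)^2 \<le> gam \<and>
                 p_pen_relax f X gam lam \<le> p_pen f X gam lam \<and>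
                 p_pen f X gam lam \<le> OPT \<and>
                 OPT \<le> p_pen_relax f X gam lam + ereal (lam * (real (rank X) + 1))"
    using ut01 feas1 feas2 rel_pen pen_opt opt_bound unfolding Let_def OPT_def w_def ut_def vt_def by blast
qed
end
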